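(* Let $f$ be a positive function with $f(u)\to0$ as $u\to\infty$ which is eventually $C^1$, decreasing, and strictly convex. If $f$ is regularly varying of index $-\alpha$ for some $0<\alpha\le1$, then $y\mapsto u_0(\mathrm{e}^{y})$ and $y\mapsto\omega(\mathrm{e}^{y})$ are regularly varying functions (as $y\to\infty$) of index $\frac{1}{1+\alpha}$; that is, $u_0(x^{\lambda})\sim\lambda^{1/(1+\alpha)}u_0(x)$ and $\omega(x^{\lambda})\sim\lambda^{1/(1+\alpha)}\omega(x)$ as $x\to\infty$ for every $\lambda>0$. If $f$ is slowly varying, then $y\mapsto\omega(\mathrm{e}^{y})$ is regularly varying of index $1$, i.e. $\omega(x^{\lambda})\sim\lambda\omega(x)$ for every $\lambda>0$.
   Context: A positive function $F$ is regularly varying of index $\rho$ if $F(\lambda u)/F(u)\to\lambda^{\rho}$ as $u\to\infty$ for every $\lambda>0$; slowly varying means index $0$. $h(u,x)=f(u)\log x+u$, $\omega(x)=\inf_{u\ge0}h(u,x)$, and for $x$ sufficiently large $u_0(x)$ is the unique minimizer of $u\mapsto h(u,x)$ (the unique solution of $f'(u)=-1/\log x$). *)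

theory Defs
  imports "HOL-Analysis.Analysis"
begin

definition regularly_varying :: "real \<Rightarrow> (real \<Rightarrow> real) \<Rightarrow> bool" where
  "regularly_varying \<rho> F \<longleftrightarrow>
     (\<forall>\<^sub>F u in at_top. F u > 0) \<and>
     (\<forall>c>0. ((\<lambda>u. F (c * u) / F u) \<longlongrightarrow> c powr \<rho>) at_top)"

abbreviation slowly_varying :: "(real \<Rightarrow> real) \<Rightarrow> bool" where
  "slowly_varying F \<equiv> regularly_varying 0 F"

definition strictly_convex_on :: "real set \<Rightarrow> (real \<Rightarrow> real) \<Rightarrow> bool" where
  "strictly_convex_on S f \<longleftrightarrow> convex S \<and>
     (\<forall>x\<in>S. \<forall>y\<in>S. \<forall>t. x \<noteq> y \<and> 0 < t \<and> t < 1 \<longrightarrow>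
        f (t * x + (1 - t) * y) < t * f x + (1 - t) * f y)"

definition h :: "(real \<Rightarrow> real) \<Rightarrow> real \<Rightarrow> real \<Rightarrow> real" where
  "h f u x = f u * ln x + u"

definition omega :: "(real \<Rightarrow> real) \<Rightarrow> real \<Rightarrow> real" where
  "omega f x = (INF u\<in>{0..}. h f u x)"

text \<open>The (for large x unique) minimiser of u |-> h f u x over u >= 0.\<close>
definition u0 :: "(real \<Rightarrow> real) \<Rightarrow> real \<Rightarrow> real" where
  "u0 f x = (THE u. u \<ge> 0 \<and> (\<forall>v\<ge>0. h f u x \<le> h f v x))"

end

theory Submission
  imports Defs
begin

lemma rv_from_elast:
  fixes \<phi> F :: "real \<Rightarrow> real"
  assumes Y: "Y > 0"
  and der: "\<And>y. y > Y \<Longrightarrow> (\<phi> has_real_derivative F y) (at y)"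
  and pos: "\<And>y. y > Y \<Longrightarrow> \<phi> y > 0"
  and el: "((\<lambda>y. y * F y / \<phi> y) \<longlongrightarrow> \<beta>) at_top"
  shows "regularly_varying \<beta> \<phi>"
proof -
  define g where "g t = ln (\<phi> (exp t))" for t
  define G where "G t = exp t * F (exp t) / \<phi> (exp t)" for t
  have gder: "(g has_real_derivative G t) (at t)" if t: "t > ln Y" for t
  proof -
    have ey: "exp t > Y" using t Y by (metis exp_less_cancel_iff exp_ln)
    have "((\<lambda>t. \<phi> (exp t)) has_real_derivative F (exp t) * exp t) (at t)"
      by (rule DERIV_chain'[OF DERIV_exp der[OF ey]])
    from DERIV_chain'[OF this DERIV_ln_divide[OF pos[OF ey]]]
    show ?thesis unfolding g_def G_def by (simp add: mult.commute)
  qed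
  have Glim: "(G \<longlongrightarrow> \<beta>) at_top"
    unfolding G_def using filterlim_compose[OF el exp_at_top] by (simp add: o_def)
  have main: "((\<lambda>u. \<phi> (c * u) / \<phi> u) \<longlongrightarrow> c powr \<beta>) at_top" if c: "c > 0" for c
  proof -
    define s where "s = ln c"
    have D: "((\<lambda>t. g (t + s) - g t) \<longlongrightarrow> \<beta> * s) at_top"
    proof (rule tendstoI)
      fix e :: real assume e: "e > 0"
      have "e / (\<bar>s\<bar> + 1) > 0" using e by simp
      from tendstoD[OF Glim this] obtain T where T: "\<And>t. t \<ge> T \<Longrightarrow> dist (G t) \<beta> < e / (\<bar>s\<bar> + 1)"
        unfolding eventually_at_top_linorder by blast
      have "\<forall>t\<ge>max (T + \<bar>s\<bar>) (ln Y + \<bar>s\<bar> + 1). dist (g (t + s) - g t) (\<beta> * s) < e"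
      proof (intro allI impI)
        fix t assume t: "t \<ge> max (T + \<bar>s\<bar>) (ln Y + \<bar>s\<bar> + 1)"
        have key: "\<exists>z. z \<ge> T \<and> g (t + s) - g t = s * G z"
        proof (cases s "0::real" rule: linorder_cases)
          case less
          have "\<exists>z. t + s < z \<and> z < t \<and> g t - g (t + s) = (t - (t + s)) * G z"
            by (rule MVT2) (use less t in \<open>auto intro!: gder\<close>)
          then obtain z where "t + s < z" "z < t" "g t - g (t + s) = (t - (t + s)) * G z" by blast
          then show ?thesis using less t by (intro exI[of _ z]) (auto simp: algebra_simps)
        next
          case equal then show ?thesis by (auto intro: exI[of _ T])
        next
          case greater
          have "\<exists>z. t < z \<and> z < t + s \<and> g (t + s) - g t = (t + s - t) * G z"
            by (rule MVT2) (use greater t in \<open>auto intro!: gder\<close>)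
          then obtain z where "t < z" "z < t + s" "g (t + s) - g t = (t + s - t) * G z" by blast
          then show ?thesis using greater t by (intro exI[of _ z]) (auto simp: algebra_simps)
        qed
        then obtain z where z: "z \<ge> T" "g (t + s) - g t = s * G z" by blast
        have "dist (g (t + s) - g t) (\<beta> * s) = \<bar>s\<bar> * dist (G z) \<beta>"
          using z(2) by (simp add: dist_real_def abs_mult[symmetric] algebra_simps)
        also have "\<dots> \<le> \<bar>s\<bar> * (e / (\<bar>s\<bar> + 1))"
          using T[OF z(1)] by (intro mult_left_mono) auto
        also have "\<dots> < e" using e by (simp add: field_simps)
        finally show "dist (g (t + s) - g t) (\<beta> * s) < e" .
      qed
      then show "\<forall>\<^sub>F t in at_top. dist (g (t + s) - g t) (\<beta> * s) < e"
        unfolding eventually_at_top_linorder by blast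
    qed
    have "((\<lambda>u. exp (g (ln u + s) - g (ln u))) \<longlongrightarrow> exp (\<beta> * s)) at_top"
      by (rule tendsto_exp[OF filterlim_compose[OF D ln_at_top]])
    moreover have "exp (\<beta> * s) = c powr \<beta>" using c by (simp add: powr_def s_def mult.commute)
    moreover have "\<forall>\<^sub>F u in at_top. exp (g (ln u + s) - g (ln u)) = \<phi> (c * u) / \<phi> u"
    proof -
      have "\<forall>\<^sub>F u in at_top. u > max Y (Y / c)" by (rule eventually_gt_at_top)
      then show ?thesis
      proof eventually_elim
        case (elim u)
        then have u: "u > 0" "u > Y" "c * u > Y" using Y c by (auto simp: field_simps)
        have "exp (ln u + s) = c * u" using u c by (simp add: s_def exp_add)
        then show ?case using u pos[of u] pos[of "c*u"] unfolding g_def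
          by (simp add: exp_diff)
      qed
    qed
    ultimately show ?thesis using tendsto_cong by fastforce
  qed
  have "\<forall>\<^sub>F u in at_top. \<phi> u > 0"
    using eventually_gt_at_top[of Y] by eventually_elim (use pos in auto)
  then show ?thesis unfolding regularly_varying_def using main by blast
qed

lemma min_exists:
  fixes f :: "real \<Rightarrow> real"
  assumes pos: "\<And>u. u \<ge> 0 \<Longrightarrow> f u > 0" and cont: "continuous_on {0..} f" and y: "y \<ge> 0"
  shows "\<exists>w\<ge>0. \<forall>v\<ge>0. f w * y + w \<le> f v * y + v"
proof -
  have "continuous_on {0..y * f 0} (\<lambda>v. f v * y + v)"
    by (intro continuous_intros continuous_on_subset[OF cont]) auto
  moreover have "{0..y * f 0} \<noteq> {}" using pos[of 0] y by auto
  ultimately obtain w where w: "w \<in> {0..y * f 0}" "\<forall>v\<in>{0..y * f 0}. f w * y + w \<le> f v * y + v"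
    using continuous_attains_inf[of "{0..y * f 0}" "\<lambda>v. f v * y + v"] by auto
  have "f w * y + w \<le> f v * y + v" if v: "v \<ge> 0" for v
  proof (cases "v \<le> y * f 0")
    case True then show ?thesis using w v by auto
  next
    case False
    have z: "0 \<in> {0..y * f 0}" using pos[of 0] y by simp
    have "f w * y + w \<le> f 0 * y + 0" using w(2) z by blast
    also have "\<dots> < v" using False by (simp add: mult.commute)
    also have "\<dots> \<le> f v * y + v" using pos[OF v] y by simp
    finally show ?thesis by simp
  qed
  moreover have "w \<ge> 0" using w(1) by simp
  ultimately show ?thesis by blast
qed

lemma min_large:
  fixes f :: "real \<Rightarrow> real"
  assumes pos: "\<And>u. u \<ge> 0 \<Longrightarrow> f u > 0" and cont: "continuous_on {0..} f"
    and lim0: "(f \<longlongrightarrow> 0) at_top" and M: "M \<ge> 0"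
  shows "\<exists>Y>0. \<forall>y>Y. \<forall>w\<ge>0. (\<forall>v\<ge>0. f w * y + w \<le> f v * y + v) \<longrightarrow> w > M"
proof -
  obtain x where x: "x \<in> {0..M}" "\<forall>v\<in>{0..M}. f x \<le> f v"
  proof -
    have "continuous_on {0..M} f" using continuous_on_subset[OF cont] by auto
    then show ?thesis using continuous_attains_inf[of "{0..M}" f] M that by auto
  qed
  define m where "m = f x"
  have m: "m > 0" using x pos unfolding m_def by auto
  have "\<forall>\<^sub>F v in at_top. f v < m / 2" using order_tendstoD(2)[OF lim0, of "m/2"] m by simp
  then obtain v0 where v0: "\<And>v. v \<ge> v0 \<Longrightarrow> f v < m / 2" unfolding eventually_at_top_linorder by blast
  define V where "V = max v0 1"
  have V: "V > 0" "f V < m / 2" using v0 unfolding V_def by auto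
  define Y where "Y = 2 * V / m"
  have "Y > 0" using V m unfolding Y_def by simp
  moreover have "w > M" if y: "y > Y" and w: "w \<ge> 0" "\<forall>v\<ge>0. f w * y + w \<le> f v * y + v" for y w
  proof (rule ccontr)
    assume "\<not> w > M"
    then have "m \<le> f w" using x w unfolding m_def by auto
    have y0: "y > 0" using y \<open>Y > 0\<close> by simp
    have "m * y \<le> f w * y + w" using mult_right_mono[OF \<open>m \<le> f w\<close>, of y] y0 w(1) by linarith
    also have "\<dots> \<le> f V * y + V" using w V by auto
    also have "\<dots> < m / 2 * y + V" using V y0 by simp
    finally have "m * y / 2 < V" by simp
    then have "y < Y" using m unfolding Y_def by (simp add: field_simps)
    then show False using y by simp
  qed
  ultimately show ?thesis by blast
qed

lemma min_unique:
  fixes f :: "real \<Rightarrow> real"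
  assumes sc: "strictly_convex_on {U<..} f" and y: "y > 0"
    and w1: "w1 > U" "\<forall>v\<ge>0. f w1 * y + w1 \<le> f v * y + v"
    and w2: "w2 > U" "\<forall>v\<ge>0. f w2 * y + w2 \<le> f v * y + v" and U: "U \<ge> 0"
  shows "w1 = w2"
proof (rule ccontr)
  assume ne: "w1 \<noteq> w2"
  define m where "m = (1/2) * w1 + (1 - 1/2) * w2"
  have sc': "\<And>x y t. x \<in> {U<..} \<Longrightarrow> y \<in> {U<..} \<Longrightarrow> x \<noteq> y \<and> 0 < t \<and> t < 1 \<Longrightarrow>
     f (t * x + (1 - t) * y) < t * f x + (1 - t) * f y"
    using sc unfolding strictly_convex_on_def by blast
  have "f m < (1/2) * f w1 + (1 - 1/2) * f w2"
    unfolding m_def by (rule sc') (use w1 w2 ne in auto)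
  then have "f m * y < ((1/2) * f w1 + (1 - 1/2) * f w2) * y" using y by simp
  moreover have m0: "m \<ge> 0" using w1 w2 U unfolding m_def by simp
  moreover have "f w1 * y + w1 \<le> f m * y + m" using w1(2) m0 by blast
  moreover have "f w2 * y + w2 \<le> f m * y + m" using w2(2) m0 by blast
  ultimately show False unfolding m_def by (simp add: algebra_simps)
qed

lemma minimizer_facts:
  fixes f :: "real \<Rightarrow> real"
  assumes pos: "\<And>u. u \<ge> 0 \<Longrightarrow> f u > 0" and cont: "continuous_on {0..} f"
    and lim0: "(f \<longlongrightarrow> 0) at_top"
    and U: "U \<ge> 0" and sc: "strictly_convex_on {U<..} f" and M: "M \<ge> U"
  shows "\<exists>Y>0. \<forall>y>Y. u0 f (exp y) > M \<and>
           (\<forall>v\<ge>0. f (u0 f (exp y)) * y + u0 f (exp y) \<le> f v * y + v) \<and>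
           omega f (exp y) = f (u0 f (exp y)) * y + u0 f (exp y)"
proof -
  obtain Y where Y: "Y > 0" "\<And>y w. y > Y \<Longrightarrow> w \<ge> 0 \<Longrightarrow> (\<forall>v\<ge>0. f w * y + w \<le> f v * y + v) \<Longrightarrow> w > M"
    using min_large[OF pos cont lim0, of M] M U by auto
  have "u0 f (exp y) > M \<and>
           (\<forall>v\<ge>0. f (u0 f (exp y)) * y + u0 f (exp y) \<le> f v * y + v) \<and>
           omega f (exp y) = f (u0 f (exp y)) * y + u0 f (exp y)" if y: "y > Y" for y
  proof -
    obtain w where w: "w \<ge> 0" "\<forall>v\<ge>0. f w * y + w \<le> f v * y + v"
      using min_exists[OF pos cont, of y] y Y by auto
    have wM: "w > M" using Y(2)[OF y w] .
    have hh: "h f v (exp y) = f v * y + v" for v unfolding h_def by simp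
    have "u0 f (exp y) = w"
      unfolding u0_def hh
    proof (rule the_equality)
      show "0 \<le> w \<and> (\<forall>v\<ge>0. f w * y + w \<le> f v * y + v)" using w by auto
    next
      fix w' assume w': "0 \<le> w' \<and> (\<forall>v\<ge>0. f w' * y + w' \<le> f v * y + v)"
      then have w'M: "w' > M" using Y(2)[OF y] by blast
      show "w' = w" by (rule min_unique[OF sc, of y w' w]) (use w' w wM M y Y U w'M in auto)
    qed
    moreover have "omega f (exp y) = f w * y + w"
      unfolding omega_def hh
      by (rule cInf_eq_minimum) (use w in auto)
    ultimately show ?thesis using w wM by simp
  qed
  then show ?thesis using Y by blast
qed

lemma deriv_strict_mono:
  fixes f :: "real \<Rightarrow> real"
  assumes diff: "\<And>v. v > U \<Longrightarrow> f differentiable (at v)"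
    and sc: "strictly_convex_on {U<..} f" and ab: "U < a" "a < b"
  shows "deriv f a < deriv f b"
proof -
  have sc': "\<And>x y t. x \<in> {U<..} \<Longrightarrow> y \<in> {U<..} \<Longrightarrow> x \<noteq> y \<and> 0 < t \<and> t < 1 \<Longrightarrow>
     f (t * x + (1 - t) * y) < t * f x + (1 - t) * f y"
    using sc unfolding strictly_convex_on_def by blast
  have cvx: "convex_on {U<..} f"
  proof (rule convex_onI)
    fix t x y :: real assume t: "0 < t" "t < 1" and xy: "x \<in> {U<..}" "y \<in> {U<..}"
    show "f ((1 - t) *\<^sub>R x + t *\<^sub>R y) \<le> (1 - t) * f x + t * f y"
    proof (cases "x = y")
      case True then show ?thesis by (simp add: algebra_simps)
    next
      case False
      have "f ((1 - t) * x + (1 - (1 - t)) * y) < (1 - t) * f x + (1 - (1 - t)) * f y"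
        by (rule sc') (use t xy False in auto)
      then show ?thesis by simp
    qed
  qed simp
  have conn: "connected {U<..}" by (simp add: convex_connected)
  have int: "interior {U<..} = {U<..}" by (simp add: interior_open)
  have D: "(f has_field_derivative deriv f c) (at c within {U<..})" if "c > U" for c
    using diff[OF that] DERIV_deriv_iff_real_differentiable has_field_derivative_at_within by blast
  define m where "m = (1/2) * a + (1 - 1/2) * b"
  have m: "U < m" "a < m" "m < b" using ab unfolding m_def by auto
  have t1: "f m - f a \<ge> deriv f a * (m - a)"
    by (rule convex_on_imp_above_tangent[OF cvx conn]) (use ab m int D in auto)
  have t2: "f m - f b \<ge> deriv f b * (m - b)"
    by (rule convex_on_imp_above_tangent[OF cvx conn]) (use ab m int D in auto)
  have st: "f m < (1/2) * f a + (1 - 1/2) * f b"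
    unfolding m_def by (rule sc') (use ab in auto)
  have e1: "m - a = (b - a) / 2" "m - b = - ((b - a) / 2)" unfolding m_def by (auto simp: field_simps)
  have "deriv f a * ((b - a) / 2) < deriv f b * ((b - a) / 2)"
    using t1 t2 st unfolding e1 by simp
  then show ?thesis using ab by simp
qed

lemma phi_deriv:
  fixes f u \<phi> :: "real \<Rightarrow> real"
  assumes diff: "\<And>v. v > U \<Longrightarrow> f differentiable (at v)"
    and sc: "strictly_convex_on {U<..} f" and U: "U \<ge> 0" and Y: "Y > 0"
    and ugt: "\<And>y. y > Y \<Longrightarrow> u y > U"
    and minim: "\<And>y v. y > Y \<Longrightarrow> v \<ge> 0 \<Longrightarrow> f (u y) * y + u y \<le> f v * y + v"
    and phi: "\<And>y. y > Y \<Longrightarrow> \<phi> y = f (u y) * y + u y"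
    and y: "y > Y"
  shows "(\<phi> has_real_derivative f (u y)) (at y)"
proof -
  have foc: "deriv f (u z) = - 1 / z" if z: "z > Y" for z
  proof -
    have d: "((\<lambda>v. f v * z + v) has_real_derivative deriv f (u z) * z + 1) (at (u z))"
      using diff[OF ugt[OF z]] DERIV_deriv_iff_real_differentiable
      by (auto intro!: derivative_eq_intros)
    have "deriv f (u z) * z + 1 = 0"
    proof (rule DERIV_local_min[OF d])
      show "0 < u z - U" using ugt[OF z] by simp
      show "\<forall>v. \<bar>u z - v\<bar> < u z - U \<longrightarrow> f (u z) * z + u z \<le> f v * z + v"
        using minim[OF z] U by auto
    qed
    then show ?thesis using z Y by (simp add: field_simps)
  qed
  have mono: "deriv f a \<le> deriv f b" if "U < a" "a \<le> b" for a b
    using deriv_strict_mono[OF diff sc, of a b] that by (cases "a = b") auto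
  have ucont: "(u \<longlongrightarrow> u y) (at y)"
  proof (rule tendstoI)
    fix r :: real assume r: "r > 0"
    define e where "e = min r ((u y - U) / 2)"
    have e: "e > 0" "e \<le> r" "U < u y - e" using r ugt[OF y] unfolding e_def by (auto simp: min_def field_simps)
    have lo: "deriv f (u y - e) < - 1 / y"
      using deriv_strict_mono[OF diff sc, of "u y - e" "u y"] e foc[OF y] by simp
    have hi: "- 1 / y < deriv f (u y + e)"
      using deriv_strict_mono[OF diff sc, of "u y" "u y + e"] e foc[OF y] ugt[OF y] by simp
    have lim: "((\<lambda>z. - 1 / z) \<longlongrightarrow> - 1 / y) (at y)"
      using y Y by (auto intro!: tendsto_intros)
    have ev1: "\<forall>\<^sub>F z in at y. deriv f (u y - e) < - 1 / z"
      using order_tendstoD(1)[OF lim lo] .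
    have ev2: "\<forall>\<^sub>F z in at y. - 1 / z < deriv f (u y + e)"
      using order_tendstoD(2)[OF lim hi] .
    have ev3: "\<forall>\<^sub>F z in at y. Y < z"
      using order_tendstoD(1)[OF tendsto_ident_at y] .
    from ev1 ev2 ev3 show "\<forall>\<^sub>F z in at y. dist (u z) (u y) < r"
    proof eventually_elim
      case (elim z)
      have "\<not> u z \<ge> u y + e"
      proof
        assume "u z \<ge> u y + e"
        then have "deriv f (u y + e) \<le> deriv f (u z)" using mono e by auto
        then show False using elim foc[of z] by simp
      qed
      moreover have "\<not> u z \<le> u y - e"
      proof
        assume "u z \<le> u y - e"
        then have "deriv f (u z) \<le> deriv f (u y - e)" using mono ugt[of z] elim by auto
        then show False using elim foc[of z] by simp
      qed
      ultimately show ?case using e by (simp add: dist_real_def abs_less_iff)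
    qed
  qed
  have Fcont: "((\<lambda>z. f (u z)) \<longlongrightarrow> f (u y)) (at y)"
  proof (rule isCont_tendsto_compose[OF _ ucont])
    show "isCont f (u y)"
      using diff[OF ugt[OF y]] by (simp add: differentiable_imp_continuous_within)
  qed
  have bound: "\<bar>(\<phi> z - \<phi> y) / (z - y) - f (u y)\<bar> \<le> \<bar>f (u z) - f (u y)\<bar>"
    if z: "z > Y" "z \<noteq> y" for z
  proof -
    have up: "\<phi> z - \<phi> y \<le> (z - y) * f (u y)"
      using minim[OF z(1), of "u y"] ugt[OF y] U phi[OF z(1)] phi[OF y]
      by (simp add: algebra_simps)
    have lo: "\<phi> z - \<phi> y \<ge> (z - y) * f (u z)"
      using minim[OF y, of "u z"] ugt[OF z(1)] U phi[OF z(1)] phi[OF y]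
      by (simp add: algebra_simps)
    show ?thesis
    proof (cases "z > y")
      case True
      then have "(\<phi> z - \<phi> y) / (z - y) \<le> f (u y)" "(\<phi> z - \<phi> y) / (z - y) \<ge> f (u z)"
        using up lo by (simp_all add: pos_divide_le_eq pos_le_divide_eq mult.commute)
      then show ?thesis by linarith
    next
      case False
      then have zy: "z - y < 0" using z by simp
      then have "(\<phi> z - \<phi> y) / (z - y) \<ge> f (u y)" "(\<phi> z - \<phi> y) / (z - y) \<le> f (u z)"
        using up lo by (simp_all add: neg_divide_le_eq neg_le_divide_eq mult.commute)
      then show ?thesis by linarith
    qed
  qed
  have "((\<lambda>z. (\<phi> z - \<phi> y) / (z - y) - f (u y)) \<longlongrightarrow> 0) (at y)"
  proof (rule Lim_null_comparison)
    have ev3: "\<forall>\<^sub>F z in at y. Y < z"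
      using order_tendstoD(1)[OF tendsto_ident_at y] .
    moreover have "\<forall>\<^sub>F z in at y. z \<noteq> y" by (rule eventually_at_filter[THEN iffD2]) simp
    ultimately show "\<forall>\<^sub>F z in at y. norm ((\<phi> z - \<phi> y) / (z - y) - f (u y)) \<le> \<bar>f (u z) - f (u y)\<bar>"
      by eventually_elim (use bound in auto)
    show "((\<lambda>z. \<bar>f (u z) - f (u y)\<bar>) \<longlongrightarrow> 0) (at y)"
      using tendsto_rabs_zero[OF Fcont[THEN LIM_zero]] .
  qed
  then show ?thesis
    unfolding has_field_derivative_iff using LIM_zero_iff by blast
qed

lemma q_lim: "((\<lambda>c. (c powr (-\<alpha>) - 1) / (c - 1)) \<longlongrightarrow> -\<alpha>) (at (1::real))"
proof -
  have "((\<lambda>c. c powr (-\<alpha>)) has_real_derivative (-\<alpha>) * 1 powr (-\<alpha> - 1)) (at 1)"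
    by (rule has_real_derivative_powr) simp
  then show ?thesis unfolding has_field_derivative_iff by simp
qed

lemma pick_left: "eventually P (at (1::real)) \<Longrightarrow> \<exists>c. 0 < c \<and> c < 1 \<and> P c"
proof -
  assume "eventually P (at (1::real))"
  then obtain d where d: "d > 0" "\<And>x. x \<noteq> 1 \<and> dist x 1 < d \<Longrightarrow> P x"
    unfolding eventually_at by auto
  define c where "c = 1 - min d 1 / 2"
  have "0 < c" "c < 1" "c \<noteq> 1" "dist c 1 < d" using d(1) unfolding c_def dist_real_def
    by (auto simp: min_def)
  then show ?thesis using d(2) by blast
qed

lemma pick_right: "eventually P (at (1::real)) \<Longrightarrow> \<exists>c. 1 < c \<and> P c"
proof -
  assume "eventually P (at (1::real))"
  then obtain d where d: "d > 0" "\<And>x. x \<noteq> 1 \<and> dist x 1 < d \<Longrightarrow> P x"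
    unfolding eventually_at by auto
  define c where "c = 1 + d / 2"
  have "1 < c" "c \<noteq> 1" "dist c 1 < d" using d(1) unfolding c_def dist_real_def by auto
  then show ?thesis using d(2) by blast
qed

lemma elasticity:
  fixes f u :: "real \<Rightarrow> real"
  assumes pos: "\<And>v. v \<ge> 0 \<Longrightarrow> f v > 0"
    and rv: "regularly_varying (-\<alpha>) f"
    and Y: "Y > 0"
    and ulim: "filterlim u at_top at_top"
    and upos: "\<And>y. y > Y \<Longrightarrow> u y > 0"
    and minim: "\<And>y v. y > Y \<Longrightarrow> v \<ge> 0 \<Longrightarrow> f (u y) * y + u y \<le> f v * y + v"
  shows "((\<lambda>y. u y / (y * f (u y))) \<longlongrightarrow> \<alpha>) at_top"
proof -
  have rlim: "((\<lambda>y. f (c * u y) / f (u y)) \<longlongrightarrow> c powr (-\<alpha>)) at_top" if "c > 0" for c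
    using filterlim_compose[OF rv[unfolded regularly_varying_def, THEN conjunct2, rule_format, OF that] ulim]
    by (simp add: o_def)
  show ?thesis
  proof (rule order_tendstoI)
    fix a assume a: "a > \<alpha>"
    have "\<forall>\<^sub>F c in at 1. (c powr (-\<alpha>) - 1) / (c - 1) > -a"
      using order_tendstoD(1)[OF q_lim[of \<alpha>], of "-a"] a by simp
    then obtain c where c: "0 < c" "c < 1" "(c powr (-\<alpha>) - 1) / (c - 1) > -a"
      using pick_left by blast
    have qa: "(c powr (-\<alpha>) - 1) / (1 - c) < a"
    proof -
      have "(c powr (-\<alpha>) - 1) / (1 - c) = - ((c powr (-\<alpha>) - 1) / (c - 1))"
        using c by (simp add: field_simps)
      then show ?thesis using c by simp
    qed
    define \<delta> where "\<delta> = (a - (c powr (-\<alpha>) - 1) / (1 - c)) * (1 - c)"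
    have \<delta>: "\<delta> > 0" using qa c unfolding \<delta>_def by simp
    have ev: "\<forall>\<^sub>F y in at_top. f (c * u y) / f (u y) < c powr (-\<alpha>) + \<delta>"
      using order_tendstoD(2)[OF rlim[OF c(1)], of "c powr (-\<alpha>) + \<delta>"] \<delta> by simp
    from ev eventually_gt_at_top[of Y]
    show "\<forall>\<^sub>F y in at_top. u y / (y * f (u y)) < a"
    proof eventually_elim
      case (elim y)
      have uy: "u y > 0" using upos elim by simp
      have fu: "f (u y) > 0" using pos uy by simp
      have y0: "y > 0" using elim Y by simp
      have "f (u y) * y + u y \<le> f (c * u y) * y + c * u y" using minim[of y "c * u y"] elim uy c by simp
      then have "(1 - c) * u y \<le> y * (f (c * u y) - f (u y))" by (simp add: algebra_simps)
      then have ineq: "(1 - c) * u y \<le> y * (f (c * u y) - f (u y))" .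
      have "u y / (y * f (u y)) = ((1 - c) * u y) / ((1 - c) * (y * f (u y)))" using c by simp
      also have "\<dots> \<le> (y * (f (c * u y) - f (u y))) / ((1 - c) * (y * f (u y)))"
        by (rule divide_right_mono[OF ineq]) (use c y0 fu in simp)
      also have "\<dots> = (y * (f (c * u y) - f (u y))) / (y * (f (u y) * (1 - c)))"
        by (simp add: ac_simps)
      also have "\<dots> = (f (c * u y) - f (u y)) / (f (u y) * (1 - c))"
        by (rule mult_divide_mult_cancel_left) (use y0 in simp)
      finally have "u y / (y * f (u y)) \<le> (f (c * u y) - f (u y)) / (f (u y) * (1 - c))" .
      also have "\<dots> = (f (c * u y) / f (u y) - 1) / (1 - c)"
        using fu c by (simp add: field_simps)
      also have "\<dots> < (c powr (-\<alpha>) + \<delta> - 1) / (1 - c)"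
        using elim c by (simp add: divide_strict_right_mono)
      also have "\<dots> = a"
      proof -
        have "(c powr (-\<alpha>) - 1) / (1 - c) * (1 - c) = c powr (-\<alpha>) - 1" using c by simp
        then have "c powr (-\<alpha>) + \<delta> - 1 = a * (1 - c)" unfolding \<delta>_def by (simp add: algebra_simps)
        then show ?thesis using c by simp
      qed
      finally show ?case .
    qed
  next
    fix a assume a: "a < \<alpha>"
    have "\<forall>\<^sub>F c in at 1. (c powr (-\<alpha>) - 1) / (c - 1) < -a"
      using order_tendstoD(2)[OF q_lim[of \<alpha>], of "-a"] a by simp
    then obtain d where d: "1 < d" "(d powr (-\<alpha>) - 1) / (d - 1) < -a"
      using pick_right by blast
    have qa: "(1 - d powr (-\<alpha>)) / (d - 1) > a"
    proof -
      have "(1 - d powr (-\<alpha>)) / (d - 1) = - ((d powr (-\<alpha>) - 1) / (d - 1))"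
        using d by (simp add: field_simps)
      then show ?thesis using d by simp
    qed
    define \<delta> where "\<delta> = ((1 - d powr (-\<alpha>)) / (d - 1) - a) * (d - 1)"
    have \<delta>: "\<delta> > 0" using qa d unfolding \<delta>_def by simp
    have ev: "\<forall>\<^sub>F y in at_top. f (d * u y) / f (u y) < d powr (-\<alpha>) + \<delta>"
      using order_tendstoD(2)[OF rlim, of d "d powr (-\<alpha>) + \<delta>"] \<delta> d by simp
    from ev eventually_gt_at_top[of Y]
    show "\<forall>\<^sub>F y in at_top. a < u y / (y * f (u y))"
    proof eventually_elim
      case (elim y)
      have uy: "u y > 0" using upos elim by simp
      have fu: "f (u y) > 0" using pos uy by simp
      have y0: "y > 0" using elim Y by simp
      have "a = (1 - (d powr (-\<alpha>) + \<delta>)) / (d - 1)"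
      proof -
        have "(1 - d powr (-\<alpha>)) / (d - 1) * (d - 1) = 1 - d powr (-\<alpha>)" using d by simp
        then have "1 - (d powr (-\<alpha>) + \<delta>) = a * (d - 1)" unfolding \<delta>_def by (simp add: algebra_simps)
        then show ?thesis using d by simp
      qed
      also have "\<dots> < (1 - f (d * u y) / f (u y)) / (d - 1)"
        using elim d by (simp add: divide_strict_right_mono)
      also have "\<dots> = (f (u y) - f (d * u y)) / (f (u y) * (d - 1))"
        using fu d by (simp add: field_simps)
      also have "\<dots> \<le> u y / (y * f (u y))"
      proof -
        have "f (u y) * y + u y \<le> f (d * u y) * y + d * u y" using minim[of y "d * u y"] elim uy d by simp
        then have "y * (f (u y) - f (d * u y)) \<le> (d - 1) * u y" by (simp add: algebra_simps)
        then have ineq: "y * (f (u y) - f (d * u y)) \<le> (d - 1) * u y" .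
        have "(f (u y) - f (d * u y)) / (f (u y) * (d - 1)) = (y * (f (u y) - f (d * u y))) / (y * (f (u y) * (d - 1)))"
          by (rule mult_divide_mult_cancel_left[symmetric]) (use y0 in simp)
        also have "\<dots> \<le> ((d - 1) * u y) / (y * (f (u y) * (d - 1)))"
          by (rule divide_right_mono[OF ineq]) (use d y0 fu in simp)
        also have "\<dots> = ((d - 1) * u y) / ((d - 1) * (y * f (u y)))" by (simp add: ac_simps)
        also have "\<dots> = u y / (y * f (u y))"
          by (rule mult_divide_mult_cancel_left) (use d in simp)
        finally show ?thesis .
      qed
      finally show ?case .
    qed
  qed
qed

lemma sc_restrict:
  assumes "strictly_convex_on {A<..} f" "A \<le> B"
  shows "strictly_convex_on {B<..} (f :: real \<Rightarrow> real)"
  using assms unfolding strictly_convex_on_def by (auto simp: convex_real_interval)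

lemma rv_u:
  fixes \<phi> a u :: "real \<Rightarrow> real"
  assumes rv: "regularly_varying \<beta> \<phi>" and alim: "(a \<longlongrightarrow> \<beta>) at_top" and b: "\<beta> \<noteq> 1"
    and Y: "\<And>y. y > Y \<Longrightarrow> u y = \<phi> y * (1 - a y)" and upos: "\<And>y. y > Y \<Longrightarrow> u y > 0"
  shows "regularly_varying \<beta> u"
  unfolding regularly_varying_def
proof (intro conjI allI impI)
  show "\<forall>\<^sub>F y in at_top. u y > 0" using eventually_gt_at_top[of Y] by eventually_elim (use upos in auto)
  fix c :: real assume c: "c > 0"
  have r1: "((\<lambda>y. \<phi> (c * y) / \<phi> y) \<longlongrightarrow> c powr \<beta>) at_top"
    using rv c unfolding regularly_varying_def by blast
  have cy: "filterlim (\<lambda>y. c * y) at_top at_top"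
    by (rule filterlim_tendsto_pos_mult_at_top[OF tendsto_const c filterlim_ident])
  have a2: "((\<lambda>y. a (c * y)) \<longlongrightarrow> \<beta>) at_top"
    using filterlim_compose[OF alim cy] by (simp add: o_def)
  have "((\<lambda>y. \<phi> (c * y) / \<phi> y * ((1 - a (c * y)) / (1 - a y))) \<longlongrightarrow> c powr \<beta> * ((1 - \<beta>) / (1 - \<beta>))) at_top"
    using b by (intro tendsto_intros r1 a2 alim) auto
  then have lim: "((\<lambda>y. \<phi> (c * y) / \<phi> y * ((1 - a (c * y)) / (1 - a y))) \<longlongrightarrow> c powr \<beta>) at_top"
    using b by simp
  have "\<forall>\<^sub>F y in at_top. y > max Y (Y / c)" by (rule eventually_gt_at_top)
  then have "\<forall>\<^sub>F y in at_top. \<phi> (c * y) / \<phi> y * ((1 - a (c * y)) / (1 - a y)) = u (c * y) / u y"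
  proof eventually_elim
    case (elim y)
    then have y: "y > Y" "c * y > Y" using c by (auto simp: field_simps)
    show ?case using Y[OF y(1)] Y[OF y(2)] by simp
  qed
  then show "((\<lambda>y. u (c * y) / u y) \<longlongrightarrow> c powr \<beta>) at_top"
    using tendsto_cong lim by fastforce
qed

theorem proposition2p2:
  fixes f :: "real \<Rightarrow> real"
  assumes pos: "\<And>u. u \<ge> 0 \<Longrightarrow> f u > 0"
    and cont: "continuous_on {0..} f"
    and lim0: "(f \<longlongrightarrow> 0) at_top"
    and C1: "\<exists>U\<ge>0. (\<forall>u>U. f differentiable (at u)) \<and> continuous_on {U<..} (deriv f)"
    and decr: "\<exists>U\<ge>0. \<forall>u v. U < u \<and> u \<le> v \<longrightarrow> f v \<le> f u"
    and sconv: "\<exists>U\<ge>0. strictly_convex_on {U<..} f"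
  shows "(\<forall>\<alpha>. 0 < \<alpha> \<and> \<alpha> \<le> 1 \<and> regularly_varying (-\<alpha>) f \<longrightarrow>
            regularly_varying (1 / (1 + \<alpha>)) (\<lambda>y. u0 f (exp y)) \<and>
            regularly_varying (1 / (1 + \<alpha>)) (\<lambda>y. omega f (exp y)))
         \<and> (slowly_varying f \<longrightarrow> regularly_varying 1 (\<lambda>y. omega f (exp y)))"
proof -
  obtain U1 where U1: "U1 \<ge> 0" "\<And>v. v > U1 \<Longrightarrow> f differentiable (at v)" using C1 by blast
  obtain U2 where U2: "U2 \<ge> 0" "strictly_convex_on {U2<..} f" using sconv by blast
  define U where "U = max U1 U2"
  have U: "U \<ge> 0" using U1 unfolding U_def by simp
  have diff: "\<And>v. v > U \<Longrightarrow> f differentiable (at v)" using U1 unfolding U_def by simp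
  have sc: "strictly_convex_on {U<..} f" using sc_restrict[OF U2(2)] unfolding U_def by simp
  define u where "u y = u0 f (exp y)" for y
  define \<phi> where "\<phi> y = omega f (exp y)" for y
  obtain Y where Y: "Y > 0" and
    Yf: "\<And>y. y > Y \<Longrightarrow> u y > U \<and> (\<forall>v\<ge>0. f (u y) * y + u y \<le> f v * y + v) \<and> \<phi> y = f (u y) * y + u y"
    using minimizer_facts[OF pos cont lim0 U sc, of U] unfolding u_def \<phi>_def by auto
  have ugt: "\<And>y. y > Y \<Longrightarrow> u y > U" and minim: "\<And>y v. y > Y \<Longrightarrow> v \<ge> 0 \<Longrightarrow> f (u y) * y + u y \<le> f v * y + v"
    and phi: "\<And>y. y > Y \<Longrightarrow> \<phi> y = f (u y) * y + u y" using Yf by auto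
  have upos: "\<And>y. y > Y \<Longrightarrow> u y > 0" proof -
    fix y :: real assume "y > Y" then show "u y > 0" using ugt[of y] U by linarith
  qed
  have ulim: "filterlim u at_top at_top"
    unfolding filterlim_at_top
  proof
    fix Z :: real
    obtain Y' where Y': "Y' > 0" "\<And>y. y > Y' \<Longrightarrow> u y > max Z U"
      using minimizer_facts[OF pos cont lim0 U sc, of "max Z U"] unfolding u_def by auto
    have zz: "Z \<le> u y" if "y > Y'" for y using Y'(2)[OF that] by simp
    show "\<forall>\<^sub>F y in at_top. Z \<le> u y"
      by (rule eventually_mono[OF eventually_gt_at_top[of Y'] zz])
  qed
  have der: "\<And>y. y > Y \<Longrightarrow> (\<phi> has_real_derivative f (u y)) (at y)"
    by (rule phi_deriv[OF diff sc U Y ugt minim phi]) auto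
  have phipos: "\<And>y. y > Y \<Longrightarrow> \<phi> y > 0"
  proof -
    fix y assume y: "y > Y"
    have "f (u y) * y > 0" using pos[of "u y"] upos[OF y] y Y by simp
    then show "\<phi> y > 0" using phi[OF y] upos[OF y] by simp
  qed
  have key: "regularly_varying (1 / (1 + \<alpha>)) \<phi> \<and>
      ((\<lambda>y. y * f (u y) / \<phi> y) \<longlongrightarrow> 1 / (1 + \<alpha>)) at_top"
    if a0: "\<alpha> \<ge> 0" and rv: "regularly_varying (-\<alpha>) f" for \<alpha>
  proof -
    have el: "((\<lambda>y. u y / (y * f (u y))) \<longlongrightarrow> \<alpha>) at_top"
      by (rule elasticity[OF pos rv Y ulim upos minim]) auto
    have "((\<lambda>y. 1 / (1 + u y / (y * f (u y)))) \<longlongrightarrow> 1 / (1 + \<alpha>)) at_top"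
      using a0 by (intro tendsto_intros el) auto
    moreover have "\<forall>\<^sub>F y in at_top. 1 / (1 + u y / (y * f (u y))) = y * f (u y) / \<phi> y"
      using eventually_gt_at_top[of Y]
    proof eventually_elim
      case (elim y)
      have "y * f (u y) > 0" using pos[of "u y"] upos[OF elim] elim Y by simp
      moreover have "u y + y * f (u y) > 0" using upos[OF elim] calculation by simp
      moreover have gen: "\<And>p q :: real. p > 0 \<Longrightarrow> q + p > 0 \<Longrightarrow> 1 / (1 + q / p) = p / (q + p)"
        by (simp add: field_simps)
      ultimately show ?case using phi[OF elim] by (simp add: ac_simps)
    qed
    ultimately have al: "((\<lambda>y. y * f (u y) / \<phi> y) \<longlongrightarrow> 1 / (1 + \<alpha>)) at_top"
      using tendsto_cong by fastforce
    have "regularly_varying (1 / (1 + \<alpha>)) \<phi>"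
      by (rule rv_from_elast[OF Y der phipos al]) auto
    then show ?thesis using al by simp
  qed
  have part1: "regularly_varying (1 / (1 + \<alpha>)) (\<lambda>y. u0 f (exp y)) \<and>
            regularly_varying (1 / (1 + \<alpha>)) (\<lambda>y. omega f (exp y))"
    if a: "0 < \<alpha>" "\<alpha> \<le> 1" "regularly_varying (-\<alpha>) f" for \<alpha>
  proof -
    from key[of \<alpha>] a have k: "regularly_varying (1 / (1 + \<alpha>)) \<phi>"
      "((\<lambda>y. y * f (u y) / \<phi> y) \<longlongrightarrow> 1 / (1 + \<alpha>)) at_top" by auto
    have "regularly_varying (1 / (1 + \<alpha>)) u"
    proof (rule rv_u[OF k])
      show "1 / (1 + \<alpha>) \<noteq> 1" using a by (simp add: field_simps)
      show "u y = \<phi> y * (1 - y * f (u y) / \<phi> y)" if "y > Y" for y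
        using phipos[OF that] phi[OF that] by (simp add: field_simps)
      show "u y > 0" if "y > Y" for y using upos that by simp
    qed
    then show ?thesis using k unfolding u_def \<phi>_def by simp
  qed
  have part2: "regularly_varying 1 (\<lambda>y. omega f (exp y))" if "slowly_varying f"
    using key[of 0] that unfolding \<phi>_def by simp
  show ?thesis using part1 part2 by blast
qed

end
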